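(* Let $p$ be a prime, $q=p^r$, $n\ge1$, and let $l$ be an integer with $1\le l\le 2r-1$. Let $\mathscr{C}\subseteq\mathrm{GF}(q^2)^n$ be a scalable code and $\mathscr{B}$ a basis of $\mathrm{GF}(q^2)$ over $\mathrm{GF}(q)$. If there is a power of two which divides $r$ but does not divide $l$, then $\mathrm{Im}_{\mathscr{B}}(\mathscr{C})$ is self-orthogonal w.r.t. $\tilde h_l(x,y)=\sum_{i=1}^{2n}x_iy_i^{p^l}$ on $\mathrm{GF}(q)^{2n}$ if and only if $\mathrm{Tr}(\mathscr{C})$ is self-orthogonal w.r.t. $h_l(x,y)=\sum_{i=1}^n x_iy_i^{p^l}$ on $\mathrm{GF}(q)^n$.
   Context: $\mathrm{Tr}:\mathrm{GF}(q^2)\to\mathrm{GF}(q)$, $\mathrm{Tr}(a)=a+a^q$. The dual basis of a basis $\{\gamma_1,\gamma_2\}$ is the unique basis $\{\beta_1,\beta_2\}$ with $\mathrm{Tr}(\gamma_i\beta_j)=\delta_{ij}$. A code $\mathscr{C}\subseteq\mathrm{GF}(q^2)^n$ is scalable if $x\in\mathscr{C}\Rightarrow\alpha x\in\mathscr{C}$ for all $\alpha\in\mathrm{GF}(q^2)$. For a basis $\mathscr{B}$ with dual basis $\{\beta_1,\beta_2\}$, $\mathrm{Im}_{\mathscr{B}}(\mathscr{C})=\{(\mathrm{Tr}(\beta_1x_1),\ldots,\mathrm{Tr}(\beta_1x_n),\mathrm{Tr}(\beta_2x_1),\ldots,\mathrm{Tr}(\beta_2x_n)):x\in\mathscr{C}\}$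 and $\mathrm{Tr}(\mathscr{C})=\{(\mathrm{Tr}(x_1),\ldots,\mathrm{Tr}(x_n)):x\in\mathscr{C}\}$. A code $D$ is self-orthogonal w.r.t. a form $g$ if $g(x,y)=0$ for all $x,y\in D$. *)

theory Defs
  imports Main "HOL-Computational_Algebra.Primes"
begin

text \<open>The ambient field 'a plays the role of GF(q^2); GF(q) is its subfield
  of elements fixed by x \<mapsto> x^q. Vectors of length n are lists.\<close>

definition subF :: "nat \<Rightarrow> 'a::field set" where
  "subF q = {x. x ^ q = x}"

definition tr :: "nat \<Rightarrow> 'a::field \<Rightarrow> 'a" where
  "tr q a = a + a ^ q"

definition is_basis :: "nat \<Rightarrow> 'a::field \<Rightarrow> 'a \<Rightarrow> bool" where
  "is_basis q g1 g2 \<longleftrightarrow>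
     (\<forall>a\<in>subF q. \<forall>b\<in>subF q. a * g1 + b * g2 = 0 \<longrightarrow> a = 0 \<and> b = 0) \<and>
     (\<forall>x. \<exists>a\<in>subF q. \<exists>b\<in>subF q. x = a * g1 + b * g2)"

definition is_dual_basis :: "nat \<Rightarrow> 'a::field \<Rightarrow> 'a \<Rightarrow> 'a \<Rightarrow> 'a \<Rightarrow> bool" where
  "is_dual_basis q g1 g2 b1 b2 \<longleftrightarrow> is_basis q b1 b2 \<and>
     tr q (g1 * b1) = 1 \<and> tr q (g1 * b2) = 0 \<and> tr q (g2 * b1) = 0 \<and> tr q (g2 * b2) = 1"

definition scalable :: "'a::field list set \<Rightarrow> bool" where
  "scalable C \<longleftrightarrow> (\<forall>x\<in>C. \<forall>\<alpha>. map (\<lambda>c. \<alpha> * c) x \<in> C)"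

definition Im_B :: "nat \<Rightarrow> 'a::field \<Rightarrow> 'a \<Rightarrow> 'a list set \<Rightarrow> 'a list set" where
  "Im_B q b1 b2 C = (\<lambda>x. map (\<lambda>c. tr q (b1 * c)) x @ map (\<lambda>c. tr q (b2 * c)) x) ` C"

definition Tr_code :: "nat \<Rightarrow> 'a::field list set \<Rightarrow> 'a list set" where
  "Tr_code q C = map (tr q) ` C"

definition hform :: "nat \<Rightarrow> nat \<Rightarrow> nat \<Rightarrow> 'a::field list \<Rightarrow> 'a list \<Rightarrow> 'a" where
  "hform p l m x y = (\<Sum>i<m. x ! i * (y ! i) ^ (p ^ l))"

definition self_orth :: "('a list \<Rightarrow> 'a list \<Rightarrow> 'a::field) \<Rightarrow> 'a list set \<Rightarrow> bool" where
  "self_orth g D \<longleftrightarrow> (\<forall>x\<in>D. \<forall>y\<in>D. g x y = 0)"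

end

theory Submission
  imports Defs "HOL-Number_Theory.Number_Theory"
begin

lemma frob_add:
  fixes x y :: "'a::field"
  assumes "CHAR('a) = p" "prime p"
  shows "(x + y) ^ (p ^ m) = x ^ (p ^ m) + y ^ (p ^ m)"
  using freshmans_dream'[of "p ^ m" m x y] assms by simp

lemma frob_sum:
  fixes f :: "'b \<Rightarrow> 'a::field"
  assumes "CHAR('a) = p" "prime p"
  shows "sum f A ^ (p ^ m) = (\<Sum>i\<in>A. f i ^ (p ^ m))"
  using freshmans_dream_sum'[of "p ^ m" m f A] assms by simp

lemma frob_neg:
  fixes x :: "'a::field"
  assumes "CHAR('a) = p" "prime p"
  shows "(- x) ^ (p ^ m) = - (x ^ (p ^ m))"
proof -
  have "p ^ m > 0" using assms prime_gt_0_nat by simp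
  then have "(x + - x) ^ (p ^ m) = 0" by simp
  then have "x ^ (p ^ m) + (- x) ^ (p ^ m) = 0" using frob_add[OF assms] by metis
  then show ?thesis by (simp add: eq_neg_iff_add_eq_0 add.commute)
qed

lemma frob_diff:
  fixes x y :: "'a::field"
  assumes "CHAR('a) = p" "prime p"
  shows "(x - y) ^ (p ^ m) = x ^ (p ^ m) - y ^ (p ^ m)"
  using frob_add[OF assms, of x "-y" m] frob_neg[OF assms, of y m] by simp

lemma frob_inj:
  fixes x y :: "'a::field"
  assumes "CHAR('a) = p" "prime p" "x ^ (p ^ m) = y ^ (p ^ m)"
  shows "x = y"
proof -
  have "(x - y) ^ (p ^ m) = 0" using frob_diff[OF assms(1,2)] assms(3) by simp
  then show ?thesis by simp
qed

lemma pow_card_same: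
  fixes x :: "'a::{field,finite}"
  shows "x ^ card (UNIV :: 'a set) = x"
proof (cases "x = 0")
  case False
  have "x * (\<Prod>y\<in>UNIV-{0}. x * y) = x * x ^ (card (UNIV :: 'a set) - 1) * \<Prod>(UNIV-{0})"
    by (simp add: prod.distrib mult_ac)
  also have "x * x ^ (card (UNIV :: 'a set) - 1) = x ^ Suc (card (UNIV :: 'a set) - 1)"
    by (subst power_Suc) auto
  also have "Suc (card (UNIV :: 'a set) - 1) = card (UNIV :: 'a set)"
    using finite_UNIV_card_ge_0[where ?'a = 'a] by simp
  also have "(\<Prod>y\<in>UNIV-{0}. x * y) = (\<Prod>y\<in>UNIV-{0}. y)"
    by (rule prod.reindex_bij_witness[of _ "\<lambda>y. y / x" "\<lambda>y. x * y"]) (use False in auto)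
  finally show ?thesis
    by simp
qed (use finite_UNIV_card_ge_0[where ?'a = 'a] in auto)

lemma pow_iter:
  fixes t :: "'a::field"
  assumes "t ^ (p ^ a) = t"
  shows "t ^ (p ^ (a * j)) = t"
proof (induction j)
  case 0 then show ?case by simp
next
  case (Suc j)
  have pe: "p ^ (a * Suc j) = p ^ (a * j) * p ^ a" by (simp add: power_add mult.commute)
  have "t ^ (p ^ (a * Suc j)) = (t ^ (p ^ (a * j))) ^ (p ^ a)"
    by (metis pe power_mult)
  then show ?case using Suc assms by simp
qed

lemma key_fixed:
  fixes t :: "'a::field"
  assumes "CHAR('a) = p" "prime p"
    and all: "\<forall>x::'a. x ^ (p ^ (2 * r)) = x"
    and tm: "t ^ (p ^ m + 1) = -1"
    and k: "2 ^ k dvd r" "\<not> 2 ^ k dvd m"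
  shows "t ^ (p ^ r) = t"
proof -
  have t0: "t \<noteq> 0" using tm by (auto simp: power_0_left)
  have m0: "m \<noteq> 0" using k by (metis dvd_0_right)
  have e1: "t ^ (p ^ m) * t = -1" using tm by (metis power_add power_one_right)
  have "(t ^ (p ^ m) * t) ^ (p ^ m) = -1"
    using e1 frob_neg[OF assms(1,2), of 1 m] by simp
  then have "t ^ (p ^ m * p ^ m) * t ^ (p ^ m) = t * t ^ (p ^ m)"
    using e1 by (simp add: power_mult_distrib power_mult mult.commute)
  then have f2m: "t ^ (p ^ (2 * m)) = t"
    using t0 by (simp add: power_add mult_2 )
  have "2 * m \<noteq> 0" using m0 by simp
  then obtain x y where xy: "2 * m * x = 2 * r * y + gcd (2 * m) (2 * r)"
    using bezout_nat by blast
  define g where "g = gcd (2 * m) (2 * r)"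
  have "t ^ (p ^ (2 * m * x)) = t" using pow_iter[OF f2m] .
  moreover have "t ^ (p ^ (2 * m * x)) = (t ^ (p ^ (2 * r * y))) ^ (p ^ g)"
    using xy by (simp add: g_def power_add power_mult)
  moreover have "t ^ (p ^ (2 * r * y)) = t" using pow_iter[of t p "2*r"] all by blast
  ultimately have fg: "t ^ (p ^ g) = t" by simp
  have g2: "g = 2 * gcd m r" by (simp add: g_def gcd_mult_distrib_nat)
  define d where "d = gcd m r"
  obtain e where re: "r = d * e" unfolding d_def by (metis gcd_dvd2 dvdE)
  have "even e"
  proof (rule ccontr)
    assume "odd e"
    then have "coprime (2 ^ k) e" by simp
    moreover have "2 ^ k dvd d * e" using k re by simp
    ultimately have "2 ^ k dvd d" using coprime_dvd_mult_left_iff by blast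
    then have "2 ^ k dvd m" unfolding d_def using dvd_trans gcd_dvd1 by blast
    then show False using k by simp
  qed
  then obtain e' where "e = 2 * e'" by blast
  then have "r = g * e'" using re g2 d_def by simp
  then show ?thesis using pow_iter[OF fg] by simp
qed

lemma sum_split:
  "(\<Sum>i<m + (k::nat). f i) = (\<Sum>i<m. f i) + (\<Sum>i<k. (f (m + i) :: 'a::comm_monoid_add))"
  by (induction k) (simp_all add: add.assoc)

lemma hform_append:
  assumes "length L1 = n" "length M1 = n"
  shows "hform p l (2 * n) (L1 @ L2) (M1 @ M2) = hform p l n L1 M1 + hform p l n L2 M2"
  using assms by (simp add: hform_def mult_2 sum_split nth_append)

lemma tr_add:
  fixes a b :: "'a::field"
  assumes "CHAR('a) = p" "prime p"
  shows "tr (p ^ r) (a + b) = tr (p ^ r) a + tr (p ^ r) b"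
  using frob_add[OF assms, of a b r] by (simp add: tr_def algebra_simps)

lemma tr_sum:
  fixes f :: "'b \<Rightarrow> 'a::field"
  assumes "CHAR('a) = p" "prime p"
  shows "tr (p ^ r) (sum f A) = (\<Sum>i\<in>A. tr (p ^ r) (f i))"
  using frob_sum[OF assms, of f A r] by (simp add: tr_def sum.distrib)

lemma non_sub_unit:
  fixes b1 b2 :: "'a::field"
  assumes ch: "CHAR('a) = p" "prime p"
    and all: "\<forall>x::'a. x ^ (p ^ (2 * r)) = x"
    and bas: "is_basis (p ^ r) b1 b2"
    and k: "2 ^ k dvd r" "\<not> 2 ^ k dvd m"
  shows "b1 * b1 ^ (p ^ m) + b2 * b2 ^ (p ^ m) \<noteq> 0"
proof
  assume u: "b1 * b1 ^ (p ^ m) + b2 * b2 ^ (p ^ m) = 0"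
  have Q0: "p ^ r > 0" using ch prime_gt_0_nat by simp
  have in0: "(0::'a) \<in> subF (p ^ r)" and in1: "(1::'a) \<in> subF (p ^ r)"
    using Q0 by (auto simp: subF_def)
  have b2: "b2 \<noteq> 0"
  proof
    assume "b2 = 0"
    then have "0 * b1 + 1 * b2 = 0" by simp
    then show False using bas in0 in1 unfolding is_basis_def by fastforce
  qed
  define t where "t = b1 / b2"
  have "t ^ (p ^ m + 1) = (b1 * b1 ^ (p ^ m)) / (b2 * b2 ^ (p ^ m))"
    by (simp add: t_def power_divide)
  also have "\<dots> = -1" using u b2 by (simp add: eq_neg_iff_add_eq_0 field_simps)
  finally have "t ^ (p ^ m + 1) = -1" .
  then have tq: "t ^ (p ^ r) = t" using key_fixed[OF ch all _ k] by blast
  have "(- t) ^ (p ^ r) = - t" using frob_neg[OF ch, of t r] tq by simp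
  then have "- t \<in> subF (p ^ r)" by (simp add: subF_def)
  moreover have "1 * b1 + (- t) * b2 = 0" using b2 by (simp add: t_def)
  ultimately show False using bas in1 unfolding is_basis_def by fastforce
qed

lemma exists_nonsub:
  fixes b1 b2 :: "'a::field"
  assumes ch: "CHAR('a) = p" "prime p"
    and bas: "is_basis (p ^ r) b1 b2"
  shows "\<exists>g::'a. g ^ (p ^ r) \<noteq> g"
proof (rule ccontr)
  assume "\<not> ?thesis"
  then have all: "\<forall>g::'a. g ^ (p ^ r) = g" by blast
  then have s1: "b2 \<in> subF (p ^ r)" "- b1 \<in> subF (p ^ r)" by (auto simp: subF_def)
  have "b2 * b1 + (- b1) * b2 = 0" by simp
  then have "b2 = 0 \<and> - b1 = 0" using bas s1 unfolding is_basis_def by blast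
  then have "\<forall>x::'a. x = 0" using bas unfolding is_basis_def by auto
  then show False by (metis one_neq_zero)
qed

theorem corollary1:
  fixes C :: "('a::{field,finite}) list set"
    and p r n l :: nat and g1 g2 b1 b2 :: 'a
  assumes "prime p" and "card (UNIV :: 'a set) = p ^ (2 * r)"
    and "n \<ge> 1" and "1 \<le> l" and "l \<le> 2 * r - 1"
    and "\<forall>x\<in>C. length x = n" and "scalable C"
    and "is_basis (p ^ r) g1 g2" and "is_dual_basis (p ^ r) g1 g2 b1 b2"
    and "\<exists>k. 2 ^ k dvd r \<and> \<not> 2 ^ k dvd l"
  shows "self_orth (hform p l (2 * n)) (Im_B (p ^ r) b1 b2 C) \<longleftrightarrow>
         self_orth (hform p l n) (Tr_code (p ^ r) C)"
proof -
  note pr = assms(1)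
  have fin: "finite (UNIV :: 'a set)" by simp
  have cpos: "CHAR('a) > 0" using finite_imp_CHAR_pos[OF fin] .
  have cprime: "prime CHAR('a)" using prime_CHAR_semidom cpos by blast
  have "CHAR('a) dvd p ^ (2 * r)" using CHAR_dvd_CARD[where 'a='a] assms(2) by simp
  then have "CHAR('a) dvd p" using cprime prime_dvd_power by blast
  then have ch: "CHAR('a) = p" using cprime pr by (simp add: primes_dvd_imp_eq)
  have all: "\<forall>x::'a. x ^ (p ^ (2 * r)) = x" using pow_card_same assms(2) by metis
  define Q where "Q = p ^ r"
  define s where "s = p ^ l"
  have Qpos: "Q > 0" using pr prime_gt_0_nat Q_def by simp
  have QQe: "p ^ (2 * r) = Q * Q" by (simp add: Q_def mult_2 power_add)
  have QQ: "\<And>x::'a. x ^ (Q * Q) = x" using all QQe by metis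
  have tr: "\<And>a::'a. tr Q a = a + a ^ Q" by (simp add: tr_def)
  have trp: "\<And>a::'a. (tr Q a) ^ s = a ^ s + a ^ (Q * s)"
    using frob_add[OF ch pr] by (simp add: tr s_def power_mult)
  have trA: "\<And>a b::'a. tr Q (a + b) = tr Q a + tr Q b" unfolding Q_def by (rule tr_add[OF ch pr])
  have trS: "\<And>(f::nat \<Rightarrow> 'a) A. tr Q (sum f A) = (\<Sum>i\<in>A. tr Q (f i))"
    unfolding Q_def by (rule tr_sum[OF ch pr])
  have pw1: "\<And>z::'a. (z ^ s) ^ Q = z ^ (Q * s)" by (simp add: power_mult[symmetric] mult.commute)
  have pw2: "\<And>z::'a. (z ^ (Q * s)) ^ Q = z ^ s"
  proof -
    fix z :: 'a
    have "(z ^ (Q * s)) ^ Q = (z ^ (Q * Q)) ^ s" by (simp add: power_mult[symmetric] ac_simps)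
    then show "(z ^ (Q * s)) ^ Q = z ^ s" using QQ by simp
  qed
  have point: "tr Q (a * X) * (tr Q (b * Y)) ^ s =
      tr Q (a * b ^ s * (X * Y ^ s)) + tr Q (a * b ^ (Q * s) * (X * Y ^ (Q * s)))" for a b X Y :: 'a
  proof -
    have "tr Q (a * X) * (tr Q (b * Y)) ^ s = (a * X + (a * X) ^ Q) * ((b * Y) ^ s + (b * Y) ^ (Q * s))"
      by (subst trp[of "b * Y"], subst tr, rule refl)
    also have "\<dots> = (a * X) * (b * Y) ^ s + ((a * X) * (b * Y) ^ s) ^ Q
        + ((a * X) * (b * Y) ^ (Q * s) + ((a * X) * (b * Y) ^ (Q * s)) ^ Q)"
      by (simp only: power_mult_distrib[of "a * X"] pw1 pw2) (simp add: algebra_simps)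
    also have "\<dots> = tr Q (a * b ^ s * (X * Y ^ s)) + tr Q (a * b ^ (Q * s) * (X * Y ^ (Q * s)))"
      by (simp add: tr power_mult_distrib algebra_simps)
    finally show ?thesis .
  qed
  define A where "A = (\<lambda>x y :: 'a list. \<Sum>i<n. x ! i * (y ! i) ^ s)"
  define D where "D = (\<lambda>x y :: 'a list. \<Sum>i<n. x ! i * (y ! i) ^ (Q * s))"
  have Gform: "hform p l n (map (\<lambda>c. tr Q (a * c)) x) (map (\<lambda>c. tr Q (b * c)) y)
      = tr Q (a * b ^ s * A x y) + tr Q (a * b ^ (Q * s) * D x y)"
    if "length x = n" "length y = n" for a b :: 'a and x y
  proof -
    have "hform p l n (map (\<lambda>c. tr Q (a * c)) x) (map (\<lambda>c. tr Q (b * c)) y)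
        = (\<Sum>i<n. tr Q (a * (x ! i)) * (tr Q (b * (y ! i))) ^ s)"
      using that by (simp add: hform_def s_def)
    also have "\<dots> = (\<Sum>i<n. tr Q (a * b ^ s * (x ! i * (y ! i) ^ s)))
        + (\<Sum>i<n. tr Q (a * b ^ (Q * s) * (x ! i * (y ! i) ^ (Q * s))))"
      by (simp add: point sum.distrib)
    also have "\<dots> = tr Q (a * b ^ s * A x y) + tr Q (a * b ^ (Q * s) * D x y)"
      by (simp add: trS A_def D_def sum_distrib_left)
    finally show ?thesis .
  qed
  have tr0: "tr Q (0::'a) = 0" using Qpos by (simp add: tr)
  have lenC: "\<And>x. x \<in> C \<Longrightarrow> length x = n" using assms(6) by blast
  have scal: "\<And>x a. x \<in> C \<Longrightarrow> map (\<lambda>c. a * c) x \<in> C" using assms(7) by (simp add: scalable_def)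
  have dual: "tr Q (g1 * b1) = 1" and basb: "is_basis Q b1 b2"
    using assms(9) by (simp_all add: is_dual_basis_def Q_def)
  obtain k where k: "2 ^ k dvd r" "\<not> 2 ^ k dvd l" using assms(10) by blast
  have u0: "b1 * b1 ^ s + b2 * b2 ^ s \<noteq> 0"
    using non_sub_unit[OF ch pr all basb[unfolded Q_def] k] s_def by simp
  have k2: "\<not> 2 ^ k dvd (r + l)" using k by (simp add: dvd_add_right_iff)
  have v0: "b1 * b1 ^ (Q * s) + b2 * b2 ^ (Q * s) \<noteq> 0"
    using non_sub_unit[OF ch pr all basb[unfolded Q_def] k(1) k2] by (simp add: Q_def s_def power_add)
  obtain g :: 'a where g: "g ^ Q \<noteq> g" using exists_nonsub[OF ch pr basb[unfolded Q_def]] Q_def by blast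
  have nondeg: "w = 0" if "\<forall>\<alpha>. tr Q (\<alpha> * w) = 0" for w :: 'a
  proof (rule ccontr)
    assume "w \<noteq> 0"
    then have "tr Q ((g1 * b1 / w) * w) = tr Q (g1 * b1)" by simp
    moreover have "tr Q ((g1 * b1 / w) * w) = 0" using that by blast
    ultimately show False using dual by simp
  qed
  show ?thesis
  proof
    assume H: "self_orth (hform p l (2 * n)) (Im_B (p ^ r) b1 b2 C)"
    show "self_orth (hform p l n) (Tr_code (p ^ r) C)"
      unfolding self_orth_def Tr_code_def
    proof (intro ballI, elim imageE)
      fix X Y x y assume xC: "x \<in> C" and X: "X = map (tr (p ^ r)) x"
        and yC: "y \<in> C" and Y: "Y = map (tr (p ^ r)) y"
      have lx: "length x = n" and ly: "length y = n" using xC yC lenC by auto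
      define u where "u = b1 * b1 ^ s + b2 * b2 ^ s"
      define v where "v = b1 * b1 ^ (Q * s) + b2 * b2 ^ (Q * s)"
      have E: "\<beta> ^ s * u * A x y + \<beta> ^ (Q * s) * v * D x y = 0" for \<beta>
      proof (rule nondeg, rule allI)
        fix \<alpha> :: 'a
        let ?x = "map (\<lambda>c. \<alpha> * c) x" and ?y = "map (\<lambda>c. \<beta> * c) y"
        have cx: "?x \<in> C" and cy: "?y \<in> C" using scal xC yC by auto
        have mem1: "(\<lambda>x. map (\<lambda>c. tr Q (b1 * c)) x @ map (\<lambda>c. tr Q (b2 * c)) x) ?x \<in> Im_B (p ^ r) b1 b2 C"
          unfolding Im_B_def Q_def using cx by (rule imageI)
        have mem2: "(\<lambda>x. map (\<lambda>c. tr Q (b1 * c)) x @ map (\<lambda>c. tr Q (b2 * c)) x) ?y \<in> Im_B (p ^ r) b1 b2 C"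
          unfolding Im_B_def Q_def using cy by (rule imageI)
        note mem = mem1 mem2
        have "0 = hform p l (2 * n) (map (\<lambda>c. tr Q (b1 * \<alpha> * c)) x @ map (\<lambda>c. tr Q (b2 * \<alpha> * c)) x)
               (map (\<lambda>c. tr Q (b1 * \<beta> * c)) y @ map (\<lambda>c. tr Q (b2 * \<beta> * c)) y)"
          using H mem unfolding self_orth_def by (simp add: o_def mult.assoc)
        also have "\<dots> = hform p l n (map (\<lambda>c. tr Q (b1 * \<alpha> * c)) x) (map (\<lambda>c. tr Q (b1 * \<beta> * c)) y)
             + hform p l n (map (\<lambda>c. tr Q (b2 * \<alpha> * c)) x) (map (\<lambda>c. tr Q (b2 * \<beta> * c)) y)"
          using lx ly by (simp add: hform_append)
        also have "\<dots> = tr Q (b1 * \<alpha> * (b1 * \<beta>) ^ s * A x y) + tr Q (b1 * \<alpha> * (b1 * \<beta>) ^ (Q * s) * D x y)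
             + (tr Q (b2 * \<alpha> * (b2 * \<beta>) ^ s * A x y) + tr Q (b2 * \<alpha> * (b2 * \<beta>) ^ (Q * s) * D x y))"
          using lx ly by (simp add: Gform)
        also have "\<dots> = tr Q (b1 * \<alpha> * (b1 * \<beta>) ^ s * A x y + b1 * \<alpha> * (b1 * \<beta>) ^ (Q * s) * D x y
             + (b2 * \<alpha> * (b2 * \<beta>) ^ s * A x y + b2 * \<alpha> * (b2 * \<beta>) ^ (Q * s) * D x y))"
          by (simp add: trA)
        also have "\<dots> = tr Q (\<alpha> * (\<beta> ^ s * u * A x y + \<beta> ^ (Q * s) * v * D x y))"
          by (simp add: u_def v_def power_mult_distrib algebra_simps)
        finally show "tr Q (\<alpha> * (\<beta> ^ s * u * A x y + \<beta> ^ (Q * s) * v * D x y)) = 0" by simp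
      qed
      have E1: "u * A x y + v * D x y = 0" using E[of 1] by simp
      have Eg: "g ^ s * u * A x y + g ^ (Q * s) * v * D x y = 0" using E[of g] .
      have "(g ^ s - g ^ (Q * s)) * (u * A x y) = 0"
      proof -
        have "(g ^ s - g ^ (Q * s)) * (u * A x y) = (g ^ s * u * A x y + g ^ (Q * s) * v * D x y)
             - g ^ (Q * s) * (u * A x y + v * D x y)" by (simp add: algebra_simps)
        then show ?thesis using E1 Eg by simp
      qed
      moreover have "g ^ s \<noteq> g ^ (Q * s)"
      proof
        assume "g ^ s = g ^ (Q * s)"
        then have "g ^ (p ^ l) = (g ^ Q) ^ (p ^ l)" by (simp add: s_def power_mult)
        then have "g = g ^ Q" using frob_inj[OF ch pr] by blast
        then show False using g by simp
      qed
      ultimately have "u * A x y = 0" by simp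
      then have A0: "A x y = 0" using u0 u_def by simp
      then have "v * D x y = 0" using E1 by simp
      then have D0: "D x y = 0" using v0 v_def by simp
      have "hform p l n X Y = hform p l n (map (\<lambda>c. tr Q (1 * c)) x) (map (\<lambda>c. tr Q (1 * c)) y)"
        using X Y Q_def by simp
      also have "\<dots> = 0" using Gform[OF lx ly, of 1 1] A0 D0 tr0 by simp
      finally show "hform p l n X Y = 0" .
    qed
  next
    assume H: "self_orth (hform p l n) (Tr_code (p ^ r) C)"
    show "self_orth (hform p l (2 * n)) (Im_B (p ^ r) b1 b2 C)"
      unfolding self_orth_def Im_B_def
    proof (intro ballI, elim imageE)
      fix X Y x y assume xC: "x \<in> C" and X: "X = map (\<lambda>c. tr (p ^ r) (b1 * c)) x @ map (\<lambda>c. tr (p ^ r) (b2 * c)) x"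
        and yC: "y \<in> C" and Y: "Y = map (\<lambda>c. tr (p ^ r) (b1 * c)) y @ map (\<lambda>c. tr (p ^ r) (b2 * c)) y"
      have lx: "length x = n" and ly: "length y = n" using xC yC lenC by auto
      have z: "hform p l n (map (\<lambda>c. tr (p ^ r) (b * c)) x) (map (\<lambda>c. tr (p ^ r) (b * c)) y) = 0" for b
      proof -
        have "map (\<lambda>c. tr (p ^ r) (b * c)) x \<in> Tr_code (p ^ r) C"
          "map (\<lambda>c. tr (p ^ r) (b * c)) y \<in> Tr_code (p ^ r) C"
          unfolding Tr_code_def
          by (rule image_eqI[where x="map ((*) b) x"], simp, rule scal[OF xC],
              rule image_eqI[where x="map ((*) b) y"], simp, rule scal[OF yC])
        then show ?thesis using H unfolding self_orth_def by blast
      qed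
      show "hform p l (2 * n) X Y = 0" using X Y lx ly z[of b1] z[of b2] by (simp add: hform_append)
    qed
  qed
qed

end
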